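(* Let $E,F$ be nondeterministic expressions, $P$ a probabilistic expression, $X$ a variable and $0<p<1$. Then $\mathrm{rec}\,X.(\tau.(\partial(X+E)\oplus_pP)+F)\ \simeq\ \mathrm{rec}\,X.(\tau.(\partial(X+E)\oplus_pP)+\tau.P+F)$.
   Context: Fix a set $\mathsf{Act}$ of actions containing $\tau$ and a set $\mathsf{Var}$ of variables. Nondeterministic expressions: $E ::= 0 \mid X \mid \alpha.P \mid \mathrm{rec}\,X.E \mid E + E$; probabilistic expressions: $P ::= \partial(E) \mid P \oplus_p P$ ($0<p<1$). $\mathrm{rec}\,X$ binds $X$; closed means no free variables; $E[\vec F/\vec X]$ is capture-avoiding substitution. Subdistributions $\mu$ over $S$: $\mu:S\to\mathbb R_{\ge0}$, $|\mu|=\sum\mu(s)\le1$; $\delta_s$ Dirac. Semantics: least relations with $\partial(E)\mapsto\delta_E$; $P\oplus_pQ\mapsto p\mu+(1-p)\nu$ if $P\mapsto\mu,Q\mapsto\nu$; $\alpha.P\xrightarrow{\alpha}\mu$ if $P\mapsto\mu$; $\mathrm{rec}\,X.E\xrightarrow{\alpha}\mu$ if $E[\mathrm{rec}\,X.E/X]\xrightarrow{\alpha}\mu$; $E+F\xrightarrow{\alpha}\mu$ and $F+E\xrightarrow{\alpha}\mu$ if $E\xrightarrow{\alpha}\mu$. Combined transitions on subdistributions: least relation with $\delta_E\xrightarrow{\alpha}\mu$ if $E\xrightarrow{\alpha}\mu$, closed under $\sum p_i\nu_i\xrightarrow{\alpha}\sum p_i\mu_i$ ($\nu_i\xrightarrow{\alpha}\mu_i$,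 $p_i\ge0$, $\sum p_i\le1$). A derivation is $(\mu_i^{\to},\mu_i^{\times})_{i\in\mathbb N}$ with $\mu_i^{\to}\xrightarrow{\tau}\mu^{\to}_{i+1}+\mu^{\times}_{i+1}$; $\mu\Rightarrow\nu$ iff a derivation has $\mu=\mu_0^{\to}+\mu_0^{\times}$, $\nu=\sum_i\mu_i^\times$. $\mu\xRightarrow{\alpha}\nu$ iff $\mu\Rightarrow\xrightarrow{\alpha}\Rightarrow\nu$; $\xRightarrow{\hat\alpha}$ is $\Rightarrow$ for $\alpha=\tau$, else $\xRightarrow{\alpha}$. Lifting of a relation to subdistributions: least relation with $\delta_E\mathcal R\delta_F$ for $E\mathcal RF$, closed under convex combinations with coefficients summing to at most 1. Weak bisimulation on closed expressions: if $E\mathcal RF$ and $E\xrightarrow{\alpha}\mu$ then $F\xRightarrow{\hat\alpha}\nu$ with $\mu\mathcal R\nu$, and symmetrically; $\approx$ is weak bisimilarity. For closed $E,F$: $E\simeq F$ iff $E\xrightarrow{\alpha}\mu$ implies $F\xRightarrow{\alpha}\nu$ with $\mu\approx\nu$ and $F\xrightarrow{\alpha}\nu$ implies $E\xRightarrow{\alpha}\mu$ with $\mu\approx\nu$. For open expressions with free variables $\vec X$: $E\simeq F$ iff $E[\vec G/\vec X]\simeq F[\vec G/\vec X]$ for all closed $\vec G$. *)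

theory Defs
  imports "HOL-Analysis.Analysis"
begin

datatype 'a act = Tau | Act 'a

datatype ('a, 'x) nexp =
    NNil
  | NVar 'x
  | NPre "'a act" "('a, 'x) pexp"
  | NRec 'x "('a, 'x) nexp"
  | NSum "('a, 'x) nexp" "('a, 'x) nexp"
and ('a, 'x) pexp =
    PDirac "('a, 'x) nexp"
  | PChoice "('a, 'x) pexp" real "('a, 'x) pexp"

fun wfn :: "('a, 'x) nexp \<Rightarrow> bool" and wfp :: "('a, 'x) pexp \<Rightarrow> bool" where
  "wfn NNil = True"
| "wfn (NVar x) = True"
| "wfn (NPre a P) = wfp P"
| "wfn (NRec x E) = wfn E"
| "wfn (NSum E F) = (wfn E \<and> wfn F)"
| "wfp (PDirac E) = wfn E"
| "wfp (PChoice P p Q) = (0 < p \<and> p < 1 \<and> wfp P \<and> wfp Q)"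

fun fvn :: "('a, 'x) nexp \<Rightarrow> 'x set" and fvp :: "('a, 'x) pexp \<Rightarrow> 'x set" where
  "fvn NNil = {}"
| "fvn (NVar x) = {x}"
| "fvn (NPre a P) = fvp P"
| "fvn (NRec x E) = fvn E - {x}"
| "fvn (NSum E F) = fvn E \<union> fvn F"
| "fvp (PDirac E) = fvn E"
| "fvp (PChoice P p Q) = fvp P \<union> fvp Q"

text \<open>Simultaneous substitution. It is capture-avoiding whenever the substituted
  expressions are closed, which is the case for every use below.\<close>
fun nsubst :: "('x \<Rightarrow> ('a, 'x) nexp) \<Rightarrow> ('a, 'x) nexp \<Rightarrow> ('a, 'x) nexp"
and psubst :: "('x \<Rightarrow> ('a, 'x) nexp) \<Rightarrow> ('a, 'x) pexp \<Rightarrow> ('a, 'x) pexp" where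
  "nsubst \<sigma> NNil = NNil"
| "nsubst \<sigma> (NVar x) = \<sigma> x"
| "nsubst \<sigma> (NPre a P) = NPre a (psubst \<sigma> P)"
| "nsubst \<sigma> (NRec x E) = NRec x (nsubst (\<sigma>(x := NVar x)) E)"
| "nsubst \<sigma> (NSum E F) = NSum (nsubst \<sigma> E) (nsubst \<sigma> F)"
| "psubst \<sigma> (PDirac E) = PDirac (nsubst \<sigma> E)"
| "psubst \<sigma> (PChoice P p Q) = PChoice (psubst \<sigma> P) p (psubst \<sigma> Q)"

definition proc :: "('a, 'x) nexp \<Rightarrow> bool" where
  "proc E \<longleftrightarrow> wfn E \<and> fvn E = {}"

type_synonym 's subdist = "'s \<Rightarrow> real"

definition is_subdist :: "'s subdist \<Rightarrow> bool" where
  "is_subdist \<mu> \<longleftrightarrow> (\<forall>s. 0 \<le> \<mu> s) \<and> \<mu> summable_on UNIV \<and> infsum \<mu> UNIV \<le> 1"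

definition dirac :: "'s \<Rightarrow> 's subdist" where
  "dirac s = (\<lambda>t. if t = s then 1 else 0)"

inductive pdist :: "('a, 'x) pexp \<Rightarrow> ('a, 'x) nexp subdist \<Rightarrow> bool" where
  pdist_dirac: "pdist (PDirac E) (dirac E)"
| pdist_choice: "pdist P \<mu> \<Longrightarrow> pdist Q \<nu> \<Longrightarrow>
     pdist (PChoice P p Q) (\<lambda>s. p * \<mu> s + (1 - p) * \<nu> s)"

inductive trans :: "('a, 'x) nexp \<Rightarrow> 'a act \<Rightarrow> ('a, 'x) nexp subdist \<Rightarrow> bool" where
  trans_pre: "pdist P \<mu> \<Longrightarrow> trans (NPre \<alpha> P) \<alpha> \<mu>"
| trans_rec: "trans (nsubst (NVar(X := NRec X E)) E) \<alpha> \<mu> \<Longrightarrow> trans (NRec X E) \<alpha> \<mu>"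
| trans_suml: "trans E \<alpha> \<mu> \<Longrightarrow> trans (NSum E F) \<alpha> \<mu>"
| trans_sumr: "trans E \<alpha> \<mu> \<Longrightarrow> trans (NSum F E) \<alpha> \<mu>"

inductive ctrans :: "('a, 'x) nexp subdist \<Rightarrow> 'a act \<Rightarrow> ('a, 'x) nexp subdist \<Rightarrow> bool" where
  ctrans_base: "trans E \<alpha> \<mu> \<Longrightarrow> ctrans (dirac E) \<alpha> \<mu>"
| ctrans_comb: "(\<And>i. ctrans (\<nu> i) \<alpha> (\<mu> i)) \<Longrightarrow> (\<And>i. 0 \<le> p i) \<Longrightarrow> summable p \<Longrightarrow>
     suminf p \<le> 1 \<Longrightarrow>
     ctrans (\<lambda>s. \<Sum>i. p i * \<nu> i s) \<alpha> (\<lambda>s. \<Sum>i. p i * \<mu> i s)"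

definition derivation :: "(nat \<Rightarrow> ('a, 'x) nexp subdist) \<Rightarrow> (nat \<Rightarrow> ('a, 'x) nexp subdist) \<Rightarrow> bool" where
  "derivation \<mu>t \<mu>x \<longleftrightarrow>
     (\<forall>i. is_subdist (\<mu>t i) \<and> is_subdist (\<mu>x i)) \<and>
     (\<forall>i. ctrans (\<mu>t i) Tau (\<lambda>s. \<mu>t (Suc i) s + \<mu>x (Suc i) s))"

definition wtau :: "('a, 'x) nexp subdist \<Rightarrow> ('a, 'x) nexp subdist \<Rightarrow> bool" where
  "wtau \<mu> \<nu> \<longleftrightarrow> (\<exists>\<mu>t \<mu>x. derivation \<mu>t \<mu>x \<and> \<mu> = (\<lambda>s. \<mu>t 0 s + \<mu>x 0 s) \<and>
      \<nu> = (\<lambda>s. \<Sum>i. \<mu>x i s))"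

definition wtrans :: "('a, 'x) nexp subdist \<Rightarrow> 'a act \<Rightarrow> ('a, 'x) nexp subdist \<Rightarrow> bool" where
  "wtrans \<mu> \<alpha> \<nu> \<longleftrightarrow> (\<exists>\<mu>1 \<mu>2. wtau \<mu> \<mu>1 \<and> ctrans \<mu>1 \<alpha> \<mu>2 \<and> wtau \<mu>2 \<nu>)"

definition wtrans_hat :: "('a, 'x) nexp subdist \<Rightarrow> 'a act \<Rightarrow> ('a, 'x) nexp subdist \<Rightarrow> bool" where
  "wtrans_hat \<mu> \<alpha> \<nu> \<longleftrightarrow> (if \<alpha> = Tau then wtau \<mu> \<nu> else wtrans \<mu> \<alpha> \<nu>)"

inductive lift :: "('s \<Rightarrow> 't \<Rightarrow> bool) \<Rightarrow> 's subdist \<Rightarrow> 't subdist \<Rightarrow> bool" for R where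
  lift_base: "R E F \<Longrightarrow> lift R (dirac E) (dirac F)"
| lift_comb: "(\<And>i. lift R (\<mu> i) (\<nu> i)) \<Longrightarrow> (\<And>i. 0 \<le> p i) \<Longrightarrow> summable p \<Longrightarrow>
     suminf p \<le> 1 \<Longrightarrow>
     lift R (\<lambda>s. \<Sum>i. p i * \<mu> i s) (\<lambda>s. \<Sum>i. p i * \<nu> i s)"

definition weak_bisim :: "(('a, 'x) nexp \<Rightarrow> ('a, 'x) nexp \<Rightarrow> bool) \<Rightarrow> bool" where
  "weak_bisim R \<longleftrightarrow> (\<forall>E F. R E F \<longrightarrow> proc E \<and> proc F \<and>
     (\<forall>\<alpha> \<mu>. trans E \<alpha> \<mu> \<longrightarrow> (\<exists>\<nu>. wtrans_hat (dirac F) \<alpha> \<nu> \<and> lift R \<mu> \<nu>)) \<and>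
     (\<forall>\<alpha> \<nu>. trans F \<alpha> \<nu> \<longrightarrow> (\<exists>\<mu>. wtrans_hat (dirac E) \<alpha> \<mu> \<and> lift R \<mu> \<nu>)))"

definition wbisim :: "('a, 'x) nexp \<Rightarrow> ('a, 'x) nexp \<Rightarrow> bool" where
  "wbisim E F \<longleftrightarrow> (\<exists>R. weak_bisim R \<and> R E F)"

definition cong_closed :: "('a, 'x) nexp \<Rightarrow> ('a, 'x) nexp \<Rightarrow> bool" where
  "cong_closed E F \<longleftrightarrow>
     (\<forall>\<alpha> \<mu>. trans E \<alpha> \<mu> \<longrightarrow> (\<exists>\<nu>. wtrans (dirac F) \<alpha> \<nu> \<and> lift wbisim \<mu> \<nu>)) \<and>
     (\<forall>\<alpha> \<nu>. trans F \<alpha> \<nu> \<longrightarrow> (\<exists>\<mu>. wtrans (dirac E) \<alpha> \<mu> \<and> lift wbisim \<mu> \<nu>))"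

text \<open>Extension to open expressions via all closed substitutions (for closed E, F
  the substitution is the identity, so this agrees with cong_closed).\<close>
definition cong :: "('a, 'x) nexp \<Rightarrow> ('a, 'x) nexp \<Rightarrow> bool" where
  "cong E F \<longleftrightarrow> (\<forall>\<sigma>. (\<forall>x. proc (\<sigma> x)) \<longrightarrow> cong_closed (nsubst \<sigma> E) (nsubst \<sigma> F))"

end

theory Submission
  imports Defs
begin

section \<open>Substitution lemmas\<close>

lemma subst_agree:
  "(\<forall>y\<in>fvn C. \<sigma> y = \<sigma>' y) \<Longrightarrow> nsubst \<sigma> C = nsubst \<sigma>' C"
  "(\<forall>y\<in>fvp Q. \<sigma> y = \<sigma>' y) \<Longrightarrow> psubst \<sigma> Q = psubst \<sigma>' Q"
proof (induction C and Q arbitrary: \<sigma> \<sigma>' and \<sigma> \<sigma>')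
  case (NRec x D)
  then show ?case by (auto intro!: NRec.IH)
qed auto

lemma subst_id:
  fixes C :: "('a,'x) nexp" and Q :: "('a,'x) pexp"
  shows "nsubst NVar C = C"
  "psubst NVar Q = Q"
proof (induction C and Q)
  case (NRec x D)
  then show ?case by (simp add: fun_upd_idem_iff)
qed auto

lemma subst_closed: "fvn C = {} \<Longrightarrow> nsubst \<sigma> C = C"
  using subst_agree(1)[of C \<sigma> NVar] subst_id(1)[of C] by auto

lemma fv_subst:
  "fvn (nsubst \<sigma> C) \<subseteq> (\<Union>y\<in>fvn C. fvn (\<sigma> y))"
  "fvp (psubst \<sigma> Q) \<subseteq> (\<Union>y\<in>fvp Q. fvn (\<sigma> y))"
proof (induction C and Q arbitrary: \<sigma> and \<sigma>)
  case (NRec x D)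
  show ?case
  proof
    fix z assume "z \<in> fvn (nsubst \<sigma> (NRec x D))"
    then have z: "z \<in> fvn (nsubst (\<sigma>(x := NVar x)) D)" "z \<noteq> x" by auto
    then obtain y where "y \<in> fvn D" "z \<in> fvn ((\<sigma>(x := NVar x)) y)" using NRec.IH by blast
    then show "z \<in> (\<Union>y\<in>fvn (NRec x D). fvn (\<sigma> y))" using z by (auto split: if_splits)
  qed
qed (simp; blast)+

lemma wf_subst:
  "wfn C \<Longrightarrow> (\<forall>y. wfn (\<sigma> y)) \<Longrightarrow> wfn (nsubst \<sigma> C)"
  "wfp Q \<Longrightarrow> (\<forall>y. wfn (\<sigma> y)) \<Longrightarrow> wfp (psubst \<sigma> Q)"
  by (induction C and Q arbitrary: \<sigma> and \<sigma>) auto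

lemma subst_comp:
  "(\<forall>y. fvn (\<tau> y) \<subseteq> {y}) \<Longrightarrow> nsubst \<rho> (nsubst \<tau> D) = nsubst (\<lambda>y. nsubst \<rho> (\<tau> y)) D"
  "(\<forall>y. fvn (\<tau> y) \<subseteq> {y}) \<Longrightarrow> psubst \<rho> (psubst \<tau> Q) = psubst (\<lambda>y. nsubst \<rho> (\<tau> y)) Q"
proof (induction D and Q arbitrary: \<rho> \<tau> and \<rho> \<tau>)
  case (NRec x D)
  have h: "\<forall>y. fvn ((\<tau>(x := NVar x)) y) \<subseteq> {y}" using NRec.prems by auto
  have "(\<lambda>y. nsubst (\<rho>(x := NVar x)) ((\<tau>(x := NVar x)) y)) = (\<lambda>y. nsubst \<rho> (\<tau> y))(x := NVar x)"
  proof
    fix y show "nsubst (\<rho>(x := NVar x)) ((\<tau>(x := NVar x)) y) = ((\<lambda>y. nsubst \<rho> (\<tau> y))(x := NVar x)) y"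
    proof (cases "y = x")
      case False
      then have "x \<notin> fvn (\<tau> y)" using NRec.prems by blast
      then show ?thesis using False by (auto intro!: subst_agree)
    qed simp
  qed
  moreover have "nsubst (\<rho>(x := NVar x)) (nsubst (\<tau>(x := NVar x)) D) = nsubst (\<lambda>y. nsubst (\<rho>(x := NVar x)) ((\<tau>(x := NVar x)) y)) D"
    by (rule NRec.IH[OF h])
  ultimately show ?case by (simp only: nsubst.simps)
qed auto

section \<open>Subdistributions\<close>

lemma is_subdist_dirac: "is_subdist (dirac s)"
proof -
  have "dirac s summable_on UNIV \<longleftrightarrow> dirac s summable_on {s}"
    by (rule summable_on_cong_neutral) (auto simp: dirac_def)
  moreover have "infsum (dirac s) UNIV = infsum (dirac s) {s}"
    by (rule infsum_cong_neutral) (auto simp: dirac_def)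
  ultimately show ?thesis by (auto simp: is_subdist_def dirac_def)
qed

lemma is_subdist_zero: "is_subdist (\<lambda>s. 0)"
  by (simp add: is_subdist_def)

lemma is_subdist_conv:
  assumes "is_subdist \<mu>" "is_subdist \<nu>" "0 \<le> q" "q \<le> 1"
  shows "is_subdist (\<lambda>s. q * \<mu> s + (1 - q) * \<nu> s)"
proof -
  have s1: "(\<lambda>s. q * \<mu> s) summable_on UNIV" "(\<lambda>s. (1-q) * \<nu> s) summable_on UNIV"
    using assms by (auto simp: is_subdist_def intro: summable_on_cmult_right)
  have "infsum (\<lambda>s. q * \<mu> s + (1 - q) * \<nu> s) UNIV = q * infsum \<mu> UNIV + (1-q) * infsum \<nu> UNIV"
    using s1 by (simp add: infsum_add infsum_cmult_right')
  also have "\<dots> \<le> q * 1 + (1-q) * 1"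
    using assms by (intro add_mono mult_left_mono) (auto simp: is_subdist_def)
  finally show ?thesis using assms s1 by (auto simp: is_subdist_def intro!: summable_on_add)
qed

lemma is_subdist_scale:
  assumes "is_subdist \<mu>" "0 \<le> q" "q \<le> 1"
  shows "is_subdist (\<lambda>s. q * \<mu> s)"
  using is_subdist_conv[OF assms(1) is_subdist_zero assms(2,3)] by simp

lemma pdist_subdist: "pdist Q \<mu> \<Longrightarrow> wfp Q \<Longrightarrow> is_subdist \<mu>"
  by (induction rule: pdist.induct) (auto intro!: is_subdist_dirac is_subdist_conv)

lemma pdist_det: "pdist Q \<mu> \<Longrightarrow> pdist Q \<mu>' \<Longrightarrow> \<mu>' = \<mu>"
proof (induction arbitrary: \<mu>' rule: pdist.induct)
  case (pdist_dirac E)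
  then show ?case by (cases rule: pdist.cases) auto
next
  case (pdist_choice P \<mu> Q \<nu> p)
  from pdist_choice.prems show ?case
    by (cases rule: pdist.cases) (auto dest: pdist_choice.IH)
qed

lemma pdist_ex0:
  fixes C :: "('a,'x) nexp" and Q :: "('a,'x) pexp"
  shows "True" "\<exists>\<mu>. pdist Q \<mu>"
  by (induction C and Q) (auto intro: pdist.intros)

lemmas pdist_ex = pdist_ex0(2)

lemma trans_subdist: "trans E \<alpha> \<mu> \<Longrightarrow> wfn E \<Longrightarrow> is_subdist \<mu>"
proof (induction rule: trans.induct)
  case (trans_pre P \<mu> \<alpha>)
  then show ?case by (auto intro: pdist_subdist)
next
  case (trans_rec X E \<alpha> \<mu>)
  have "\<forall>y. wfn ((NVar(X:=NRec X E)) y)" using trans_rec.prems by simp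
  then have "wfn (nsubst (NVar(X := NRec X E)) E)" using trans_rec.prems wf_subst(1)[of E "NVar(X := NRec X E)"] by simp
  then show ?case by (rule trans_rec.IH)
qed auto

section \<open>Combined transitions, lifting, derivations\<close>

lemma suminf_single0: "(\<Sum>i. (if i = (0::nat) then c else 0) * (x::real)) = c * x"
proof -
  have "(\<lambda>i. (if i = (0::nat) then c else 0) * x) = (\<lambda>i. if i = 0 then (\<lambda>_. c * x) i else 0)" by auto
  then show ?thesis using sums_single[of 0 "\<lambda>_. c * x"] sums_unique by metis
qed

lemma ctrans_scale:
  assumes "ctrans \<nu> \<alpha> \<mu>" "0 \<le> c" "c \<le> 1"
  shows "ctrans (\<lambda>s. c * \<nu> s) \<alpha> (\<lambda>s. c * \<mu> s)"
proof -
  let ?p = "\<lambda>i::nat. if i = 0 then c else 0"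
  have sp: "?p sums c" using sums_single[of 0 "\<lambda>_. c"] by (simp add: if_distrib cong: if_cong)
  have "ctrans (\<lambda>s. \<Sum>i. ?p i * \<nu> s) \<alpha> (\<lambda>s. \<Sum>i. ?p i * \<mu> s)"
    by (rule ctrans_comb[where \<nu>="\<lambda>_. \<nu>" and \<mu>="\<lambda>_. \<mu>"]) (use assms sp in \<open>auto simp: sums_iff\<close>)
  then show ?thesis by (simp only: suminf_single0)
qed

lemma ex_tau_trans: "\<exists>T \<mu>. trans T Tau \<mu>"
  by (meson pdist_dirac trans_pre)

lemma ctrans_zero: "ctrans (\<lambda>s::('a,'x) nexp. 0) Tau (\<lambda>s. 0)"
proof -
  obtain T :: "('a,'x) nexp" and \<mu> where "trans T Tau \<mu>" using ex_tau_trans by blast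
  then have "ctrans (dirac T) Tau \<mu>" by (rule ctrans_base)
  from ctrans_scale[OF this, of 0] show ?thesis by simp
qed

lemma lift_bin:
  assumes "lift R a b" "lift R c d" "0 \<le> q" "q \<le> 1"
  shows "lift R (\<lambda>s. q * a s + (1 - q) * c s) (\<lambda>s. q * b s + (1 - q) * d s)"
proof -
  let ?p = "\<lambda>i::nat. if i = 0 then q else if i = 1 then 1 - q else 0"
  let ?m = "\<lambda>i::nat. if i = 0 then a else c"
  let ?n = "\<lambda>i::nat. if i = 0 then b else d"
  have fin: "\<And>f. (\<Sum>i. ?p i * f i) = (\<Sum>i\<in>{0,1}. ?p i * f i)"
    by (rule suminf_finite) auto
  have sp: "summable ?p" by (rule summable_finite[of "{0,1}"]) auto
  have "lift R (\<lambda>s. \<Sum>i. ?p i * ?m i s) (\<lambda>s. \<Sum>i. ?p i * ?n i s)"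
    by (rule lift_comb) (use assms sp fin[of "\<lambda>_. 1"] in auto)
  moreover have "(\<lambda>s. \<Sum>i. ?p i * ?m i s) = (\<lambda>s. q * a s + (1 - q) * c s)"
    using fin by simp
  moreover have "(\<lambda>s. \<Sum>i. ?p i * ?n i s) = (\<lambda>s. q * b s + (1 - q) * d s)"
    using fin by simp
  ultimately show ?thesis by simp
qed

lemma lift_mono: "lift R \<mu> \<nu> \<Longrightarrow> (\<And>a b. R a b \<Longrightarrow> R' a b) \<Longrightarrow> lift R' \<mu> \<nu>"
  by (induction rule: lift.induct) (auto intro: lift.intros)

lemma wtau_refl:
  fixes \<mu> :: "('a,'x) nexp subdist"
  assumes "is_subdist \<mu>"
  shows "wtau \<mu> \<mu>"
proof -
  let ?t = "\<lambda>(i::nat) (s::('a,'x) nexp). 0::real"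
  let ?x = "\<lambda>(i::nat) s. if i = 0 then \<mu> s else 0"
  have d: "derivation ?t ?x"
  proof -
    have "is_subdist (?x i)" for i by (cases "i = 0") (simp_all add: assms is_subdist_zero)
    then show ?thesis unfolding derivation_def using ctrans_zero is_subdist_zero by simp
  qed
  have "(\<Sum>i. ?x i s) = \<mu> s" for s
    using sums_unique[OF sums_single[of 0 "\<lambda>_. \<mu> s"], symmetric] by simp
  then show ?thesis unfolding wtau_def using d by (intro exI[of _ ?t] exI[of _ ?x]) auto
qed

lemma wtau_one:
  assumes "ctrans \<mu>0 Tau \<nu>" "is_subdist \<mu>0" "is_subdist \<nu>"
  shows "wtau \<mu>0 \<nu>"
proof -
  let ?t = "\<lambda>(i::nat) s. if i = 0 then \<mu>0 s else 0"
  let ?x = "\<lambda>(i::nat) s. if i = 1 then \<nu> s else 0"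
  have d: "derivation ?t ?x"
    unfolding derivation_def
  proof (intro conjI allI)
    fix i show "is_subdist (?t i)"
      using assms by (cases "i = 0") (auto simp: is_subdist_zero)
    show "is_subdist (?x i)"
      using assms by (cases "i = 1") (auto simp: is_subdist_zero)
    show "ctrans (?t i) Tau (\<lambda>s. ?t (Suc i) s + ?x (Suc i) s)"
      using assms ctrans_zero by (cases i) auto
  qed
  have "(\<Sum>i. ?x i s) = \<nu> s" for s
    using sums_unique[OF sums_single[of 1 "\<lambda>_. \<nu> s"], symmetric] by simp
  then show ?thesis unfolding wtau_def using d by (intro exI[of _ ?t] exI[of _ ?x]) auto
qed

lemma wtau_prefix:
  assumes d: "derivation \<mu>t \<mu>x" and c: "ctrans (dirac A) Tau (\<lambda>s. \<mu>t 0 s + \<mu>x 0 s)"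
    and sm: "\<And>s. summable (\<lambda>i. \<mu>x i s)"
  shows "wtau (dirac A) (\<lambda>s. \<Sum>i. \<mu>x i s)"
proof -
  let ?t = "\<lambda>i. case i of 0 \<Rightarrow> dirac A | Suc j \<Rightarrow> \<mu>t j"
  let ?x = "\<lambda>i. case i of 0 \<Rightarrow> (\<lambda>s. 0) | Suc j \<Rightarrow> \<mu>x j"
  have d': "derivation ?t ?x"
    unfolding derivation_def
  proof (intro conjI allI)
    fix i show "is_subdist (?t i)"
      using d by (cases i) (auto simp: derivation_def is_subdist_zero is_subdist_dirac)
    show "is_subdist (?x i)"
      using d by (cases i) (auto simp: derivation_def is_subdist_zero is_subdist_dirac)
    show "ctrans (?t i) Tau (\<lambda>s. ?t (Suc i) s + ?x (Suc i) s)"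
      using d c by (cases i) (auto simp: derivation_def)
  qed
  have "\<And>s. (\<Sum>i. ?x i s) = (\<Sum>i. \<mu>x i s)"
  proof -
    fix s
    have "(\<lambda>i. ?x (Suc i) s) sums (\<Sum>i. \<mu>x i s)" using sm[of s] by (simp add: summable_sums)
    then have "(\<lambda>i. ?x i s) sums (\<Sum>i. \<mu>x i s)" by (subst (asm) sums_Suc_iff) simp
    then show "(\<Sum>i. ?x i s) = (\<Sum>i. \<mu>x i s)" by (rule sums_unique[symmetric])
  qed
  then show ?thesis unfolding wtau_def using d' by (intro exI[of _ ?t] exI[of _ ?x]) auto
qed

lemma geo_deriv:
  assumes tS: "trans S Tau (\<lambda>s. p * dirac S s + (1 - p) * \<mu> s)"
    and sd: "is_subdist \<mu>" and p: "0 < p" "p < 1"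
  shows "derivation (\<lambda>i s. p ^ Suc i * dirac S s) (\<lambda>i s. p ^ i * (1 - p) * \<mu> s)"
    and "\<And>s. summable (\<lambda>i. p ^ i * (1 - p) * \<mu> s)"
    and "\<And>s. (\<Sum>i. p ^ i * (1 - p) * \<mu> s) = \<mu> s"
proof -
  have cb: "ctrans (dirac S) Tau (\<lambda>s. p * dirac S s + (1 - p) * \<mu> s)"
    by (rule ctrans_base[OF tS])
  show "derivation (\<lambda>i s. p ^ Suc i * dirac S s) (\<lambda>i s. p ^ i * (1 - p) * \<mu> s)"
    unfolding derivation_def
  proof (intro conjI allI)
    fix i :: nat
    have a: "0 \<le> p ^ Suc i" "p ^ Suc i \<le> 1"
      using p power_le_one[of p "Suc i"] by simp_all
    have b: "0 \<le> p ^ i * (1 - p)" "p ^ i * (1 - p) \<le> 1" using p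
      by (auto intro!: mult_le_one power_le_one)
    show "is_subdist (\<lambda>s. p ^ Suc i * dirac S s)"
      using is_subdist_scale[OF is_subdist_dirac a] .
    show "is_subdist (\<lambda>s. p ^ i * (1 - p) * \<mu> s)"
      using is_subdist_scale[OF sd b] .
    have "ctrans (\<lambda>s. p ^ Suc i * dirac S s) Tau (\<lambda>s. p ^ Suc i * (p * dirac S s + (1 - p) * \<mu> s))"
      by (rule ctrans_scale[OF cb a])
    moreover have "(\<lambda>s. p ^ Suc i * (p * dirac S s + (1 - p) * \<mu> s)) =
       (\<lambda>s. p ^ Suc (Suc i) * dirac S s + p ^ Suc i * (1 - p) * \<mu> s)"
      by (auto simp: algebra_simps)
    ultimately show "ctrans (\<lambda>s. p ^ Suc i * dirac S s) Tau
       (\<lambda>s. p ^ Suc (Suc i) * dirac S s + p ^ Suc i * (1 - p) * \<mu> s)" by simp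
  qed
  fix s
  have "(\<lambda>i. p ^ i * ((1 - p) * \<mu> s)) sums (1 / (1 - p) * ((1 - p) * \<mu> s))"
    by (rule sums_mult2, rule geometric_sums) (use p in auto)
  then have "(\<lambda>i. p ^ i * (1 - p) * \<mu> s) sums \<mu> s" using p by (simp add: mult.assoc)
  then show "summable (\<lambda>i. p ^ i * (1 - p) * \<mu> s)" "(\<Sum>i. p ^ i * (1 - p) * \<mu> s) = \<mu> s"
    by (auto simp: sums_iff)
qed

definition spec :: "real \<Rightarrow> ('a,'x) nexp \<Rightarrow> ('a,'x) nexp subdist \<Rightarrow> bool" where
  "spec p A \<mu> \<longleftrightarrow> (\<exists>S. trans A Tau (\<lambda>s. p * dirac S s + (1 - p) * \<mu> s) \<and>
      trans S Tau (\<lambda>s. p * dirac S s + (1 - p) * \<mu> s) \<and> is_subdist \<mu>)"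

lemma spec_wtau:
  assumes "spec p A \<mu>" "0 < p" "p < 1"
  shows "wtau (dirac A) \<mu>" "wtrans (dirac A) Tau \<mu>"
proof -
  obtain S where tA: "trans A Tau (\<lambda>s. p * dirac S s + (1 - p) * \<mu> s)"
    and tS: "trans S Tau (\<lambda>s. p * dirac S s + (1 - p) * \<mu> s)" and sd: "is_subdist \<mu>"
    using assms(1) unfolding spec_def by blast
  note g = geo_deriv[OF tS sd assms(2,3)]
  have e1: "(\<lambda>s. p * dirac S s + (1 - p) * \<mu> s) = (\<lambda>s. p ^ Suc 0 * dirac S s + p ^ 0 * (1 - p) * \<mu> s)"
    by simp
  have e2: "\<mu> = (\<lambda>s. \<Sum>i. p ^ i * (1 - p) * \<mu> s)" using g(3) by simp
  have c: "ctrans (dirac A) Tau (\<lambda>s. p * dirac S s + (1 - p) * \<mu> s)" by (rule ctrans_base[OF tA])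
  have "wtau (dirac A) (\<lambda>s. \<Sum>i. p ^ i * (1 - p) * \<mu> s)"
    by (rule wtau_prefix[OF g(1)]) (use c g(2) in simp_all)
  then show "wtau (dirac A) \<mu>" using e2 by simp
  have w2: "wtau (\<lambda>s. p * dirac S s + (1 - p) * \<mu> s) \<mu>"
    unfolding wtau_def
    by (rule exI[of _ "\<lambda>i s. p ^ Suc i * dirac S s"], rule exI[of _ "\<lambda>i s. p ^ i * (1 - p) * \<mu> s"])
      (use g(1) e2 in simp)
  show "wtrans (dirac A) Tau \<mu>"
    unfolding wtrans_def using wtau_refl[OF is_subdist_dirac] c w2 by blast
qed

lemma trans_wtrans:
  assumes "trans A \<alpha> \<mu>" "is_subdist \<mu>"
  shows "wtrans (dirac A) \<alpha> \<mu>" "wtrans_hat (dirac A) \<alpha> \<mu>"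
proof -
  have c: "ctrans (dirac A) \<alpha> \<mu>" by (rule ctrans_base[OF assms(1)])
  show w: "wtrans (dirac A) \<alpha> \<mu>"
    unfolding wtrans_def using wtau_refl[OF is_subdist_dirac] wtau_refl[OF assms(2)] c by blast
  show "wtrans_hat (dirac A) \<alpha> \<mu>"
  proof (cases "\<alpha> = Tau")
    case True
    then show ?thesis unfolding wtrans_hat_def using wtau_one[OF _ is_subdist_dirac assms(2)] c by simp
  qed (use w in \<open>simp add: wtrans_hat_def\<close>)
qed

lemma unfold_subst:
  assumes "\<forall>y. fvn (\<sigma> y) = {}"
  shows "nsubst (NVar(Z := T)) (nsubst (\<sigma>(Z := NVar Z)) D) = nsubst (\<sigma>(Z := T)) D"
proof -
  have h: "\<forall>y. fvn ((\<sigma>(Z := NVar Z)) y) \<subseteq> {y}" using assms by simp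
  have "(\<lambda>y. nsubst (NVar(Z := T)) ((\<sigma>(Z := NVar Z)) y)) = \<sigma>(Z := T)"
    using assms by (auto simp: subst_closed)
  moreover have "nsubst (NVar(Z := T)) (nsubst (\<sigma>(Z := NVar Z)) D) = nsubst (\<lambda>y. nsubst (NVar(Z := T)) ((\<sigma>(Z := NVar Z)) y)) D"
    by (rule subst_comp(1)[OF h])
  ultimately show ?thesis by simp
qed

inductive_cases trans_preE: "trans (NPre a P) \<alpha> \<mu>"

lemma subst_NPre: "nsubst \<sigma> C = NPre a P \<Longrightarrow> (\<forall>y. C \<noteq> NVar y) \<Longrightarrow> \<exists>Q. C = NPre a Q \<and> P = psubst \<sigma> Q"
  by (cases C) auto

lemma subst_NRec: "nsubst \<sigma> C = NRec Z D \<Longrightarrow> (\<forall>y. C \<noteq> NVar y) \<Longrightarrow>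
    \<exists>D0. C = NRec Z D0 \<and> D = nsubst (\<sigma>(Z := NVar Z)) D0"
  by (cases C) auto

lemma subst_NSum: "nsubst \<sigma> C = NSum A1 A2 \<Longrightarrow> (\<forall>y. C \<noteq> NVar y) \<Longrightarrow>
    \<exists>C1 C2. C = NSum C1 C2 \<and> A1 = nsubst \<sigma> C1 \<and> A2 = nsubst \<sigma> C2"
  by (cases C) auto

locale L =
  fixes X :: 'x and E1 F1 :: "('a,'x) nexp" and P1 :: "('a,'x) pexp" and p :: real
  assumes fvE: "fvn E1 \<subseteq> {X}" and fvF: "fvn F1 \<subseteq> {X}" and fvP: "fvp P1 \<subseteq> {X}"
    and wfE: "wfn E1" and wfF: "wfn F1" and wfP: "wfp P1" and p0: "0 < p" and p1: "p < 1"
begin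

definition "Pb = PChoice (PDirac (NSum (NVar X) E1)) p P1"
definition "bodyG = NSum (NPre Tau Pb) F1"
definition "bodyH = NSum (NSum (NPre Tau Pb) (NPre Tau P1)) F1"
definition "G = NRec X bodyG"
definition "H = NRec X bodyH"
definition "gs = (\<lambda>_::'x. G)"
definition "hs = (\<lambda>_::'x. H)"
definition "Tg = NPre Tau (psubst gs Pb)"
definition "Th = NPre Tau (psubst hs Pb)"
definition "Qh = NPre Tau (psubst hs P1)"

lemma fv_bodies: "fvn bodyG \<subseteq> {X}" "fvn bodyH \<subseteq> {X}"
  using fvE fvF fvP by (auto simp: bodyG_def bodyH_def Pb_def)

lemma wf_bodies: "wfn bodyG" "wfn bodyH"
  using wfE wfF wfP p0 p1 by (auto simp: bodyG_def bodyH_def Pb_def)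

lemma proc_GH: "proc G" "proc H"
  using fv_bodies wf_bodies by (auto simp: proc_def G_def H_def)

lemma unfoldG: "nsubst (NVar(X := G)) bodyG = NSum Tg (nsubst gs F1)"
proof -
  have "nsubst (NVar(X := G)) bodyG = nsubst gs bodyG"
    by (rule subst_agree(1)) (use fv_bodies in \<open>auto simp: gs_def\<close>)
  then show ?thesis by (simp add: bodyG_def Tg_def)
qed

lemma unfoldH: "nsubst (NVar(X := H)) bodyH = NSum (NSum Th Qh) (nsubst hs F1)"
proof -
  have "nsubst (NVar(X := H)) bodyH = nsubst hs bodyH"
    by (rule subst_agree(1)) (use fv_bodies in \<open>auto simp: hs_def\<close>)
  then show ?thesis by (simp add: bodyH_def Th_def Qh_def)
qed

lemma Pb_gs: "psubst gs Pb = PChoice (PDirac (NSum G (nsubst gs E1))) p (psubst gs P1)"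
  by (simp add: Pb_def gs_def)

inductive Rel :: "('a,'x) nexp \<Rightarrow> ('a,'x) nexp \<Rightarrow> bool" where
  rG: "Rel G H"
| rT: "Rel Tg (NSum Th Qh)"
| rSum: "Rel A1 B1 \<Longrightarrow> Rel A2 B2 \<Longrightarrow> Rel (NSum A1 A2) (NSum B1 B2)"
| rS: "(\<forall>y. Rel (\<sigma> y) (\<sigma>' y)) \<Longrightarrow> wfn C \<Longrightarrow> Rel (nsubst \<sigma> C) (nsubst \<sigma>' C)"

lemma Rel_gh: "\<forall>y. Rel (gs y) (hs y)"
  by (simp add: gs_def hs_def rG)

lemma Rel_proc: "Rel A B \<Longrightarrow> proc A \<and> proc B"
proof (induction rule: Rel.induct)
  case rG
  then show ?case using proc_GH by simp
next
  case rT
  have "proc (NPre Tau (psubst gs Pb))" "proc (NPre Tau (psubst hs Pb))" "proc (NPre Tau (psubst hs P1))"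
    using proc_GH fv_subst(2)[of gs Pb] fv_subst(2)[of hs Pb] fv_subst(2)[of hs P1]
      wf_subst(2)[of Pb gs] wf_subst(2)[of Pb hs] wf_subst(2)[of P1 hs] wf_bodies wfP
    by (auto simp: proc_def gs_def hs_def bodyG_def)
  then show ?case by (auto simp: proc_def Tg_def Th_def Qh_def)
next
  case (rSum A1 B1 A2 B2)
  then show ?case by (auto simp: proc_def)
next
  case (rS \<sigma> \<sigma>' C)
  have "\<forall>y. proc (\<sigma> y) \<and> proc (\<sigma>' y)" using rS.IH by blast
  then show ?case using fv_subst(1)[of \<sigma> C] fv_subst(1)[of \<sigma>' C]
      wf_subst(1)[OF rS.hyps, of \<sigma>] wf_subst(1)[OF rS.hyps, of \<sigma>']
    by (auto simp: proc_def)
qed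

lemma Rel_inv:
  assumes "Rel A B"
  shows "(A = G \<and> B = H) \<or> (A = Tg \<and> B = NSum Th Qh) \<or>
    (\<exists>A1 A2 B1 B2. A = NSum A1 A2 \<and> B = NSum B1 B2 \<and> Rel A1 B1 \<and> Rel A2 B2) \<or>
    (\<exists>\<sigma> \<sigma>' C. (\<forall>y. Rel (\<sigma> y) (\<sigma>' y)) \<and> wfn C \<and> (\<forall>y. C \<noteq> NVar y) \<and>
        A = nsubst \<sigma> C \<and> B = nsubst \<sigma>' C)"
  using assms
proof (induction rule: Rel.induct)
  case rG
  show ?case by (rule disjI1) simp
next
  case rT
  show ?case by (rule disjI2, rule disjI1) simp
next
  case (rSum A1 B1 A2 B2)
  show ?case by (rule disjI2, rule disjI2, rule disjI1) (use rSum.hyps in blast)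
next
  case (rS \<sigma> \<sigma>' C)
  show ?case
  proof (cases "\<exists>y. C = NVar y")
    case True
    then obtain y where y: "C = NVar y" by blast
    have "Rel (\<sigma> y) (\<sigma>' y) \<and> ((\<sigma> y = G \<and> \<sigma>' y = H) \<or> (\<sigma> y = Tg \<and> \<sigma>' y = NSum Th Qh) \<or>
    (\<exists>A1 A2 B1 B2. \<sigma> y = NSum A1 A2 \<and> \<sigma>' y = NSum B1 B2 \<and> Rel A1 B1 \<and> Rel A2 B2) \<or>
    (\<exists>\<sigma>2 \<sigma>2' C. (\<forall>y. Rel (\<sigma>2 y) (\<sigma>2' y)) \<and> wfn C \<and> (\<forall>y. C \<noteq> NVar y) \<and>
        \<sigma> y = nsubst \<sigma>2 C \<and> \<sigma>' y = nsubst \<sigma>2' C))"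
      using rS.IH by (rule spec)
    then show ?thesis unfolding y nsubst.simps by (rule conjunct2)
  next
    case False
    have r: "\<forall>y. Rel (\<sigma> y) (\<sigma>' y)" using rS.IH by simp
    show ?thesis
      by (rule disjI2, rule disjI2, rule disjI2, intro exI[of _ \<sigma>] exI[of _ \<sigma>'] exI[of _ C])
        (use r rS.hyps False in simp)
  qed
qed

lemma psub0:
  fixes C :: "('a,'x) nexp" and Q :: "('a,'x) pexp"
  shows "True"
    "wfp Q \<Longrightarrow> (\<forall>y. Rel (\<sigma> y) (\<sigma>' y)) \<Longrightarrow>
      \<exists>\<mu> \<nu>. pdist (psubst \<sigma> Q) \<mu> \<and> pdist (psubst \<sigma>' Q) \<nu> \<and> lift Rel \<mu> \<nu>"
proof (induction C and Q)
  case (PDirac C)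
  have "Rel (nsubst \<sigma> C) (nsubst \<sigma>' C)" using PDirac.prems by (intro rS) auto
  then show ?case by (auto intro!: pdist.intros lift_base)
next
  case (PChoice Q1 q Q2)
  obtain \<mu>1 \<nu>1 where 1: "pdist (psubst \<sigma> Q1) \<mu>1" "pdist (psubst \<sigma>' Q1) \<nu>1" "lift Rel \<mu>1 \<nu>1"
    using PChoice by auto
  obtain \<mu>2 \<nu>2 where 2: "pdist (psubst \<sigma> Q2) \<mu>2" "pdist (psubst \<sigma>' Q2) \<nu>2" "lift Rel \<mu>2 \<nu>2"
    using PChoice by auto
  have "lift Rel (\<lambda>s. q * \<mu>1 s + (1 - q) * \<mu>2 s) (\<lambda>s. q * \<nu>1 s + (1 - q) * \<nu>2 s)"
    by (rule lift_bin[OF 1(3) 2(3)]) (use PChoice.prems in auto)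
  then show ?case using 1 2 by (auto intro!: pdist_choice)
qed auto

lemmas psub = psub0(2)

lemma wfPb: "wfp Pb" using wfE wfP p0 p1 by (simp add: Pb_def)

lemma trans_G: "trans (NSum Tg (nsubst gs F1)) \<alpha> \<mu> \<Longrightarrow> trans G \<alpha> \<mu>"
  unfolding G_def by (rule trans_rec) (simp add: unfoldG[unfolded G_def])

lemma trans_H: "trans (NSum (NSum Th Qh) (nsubst hs F1)) \<alpha> \<mu> \<Longrightarrow> trans H \<alpha> \<mu>"
  unfolding H_def by (rule trans_rec) (simp add: unfoldH[unfolded H_def])

lemma Rel_unfold: "Rel (NSum Tg (nsubst gs F1)) (NSum (NSum Th Qh) (nsubst hs F1))"
  by (rule rSum[OF rT rS[OF Rel_gh wfF]])

lemma Rel_closed: "Rel A B \<Longrightarrow> fvn A = {} \<and> fvn B = {}"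
  using Rel_proc by (auto simp: proc_def)

lemma simA: "trans A \<alpha> \<mu> \<Longrightarrow> Rel A B \<Longrightarrow> \<exists>\<nu>. trans B \<alpha> \<nu> \<and> lift Rel \<mu> \<nu>"
proof (induction arbitrary: B rule: trans.induct)
  case (trans_pre P \<mu> a)
  from Rel_inv[OF trans_pre.prems] show ?case
  proof (elim disjE exE conjE)
    assume "NPre a P = G" then show ?thesis by (simp add: G_def)
  next
    assume A: "NPre a P = Tg" and B: "B = NSum Th Qh"
    then have a: "a = Tau" "P = psubst gs Pb" by (auto simp: Tg_def)
    obtain \<mu>' \<nu> where m: "pdist (psubst gs Pb) \<mu>'" "pdist (psubst hs Pb) \<nu>" "lift Rel \<mu>' \<nu>"
      using psub[OF wfPb Rel_gh] by blast
    have "\<mu>' = \<mu>" using pdist_det[OF trans_pre.hyps] m(1) a by simp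
    moreover have "trans B Tau \<nu>" unfolding B Th_def by (intro trans.trans_suml trans.trans_pre m(2))
    ultimately show ?thesis using m a by blast
  next
    fix A1 A2 B1 B2 assume "NPre a P = NSum A1 A2" then show ?thesis by simp
  next
    fix \<sigma> \<sigma>' C
    assume r: "\<forall>y. Rel (\<sigma> y) (\<sigma>' y)" and w: "wfn C" and nv: "\<forall>y. C \<noteq> NVar y"
      and A: "NPre a P = nsubst \<sigma> C" and B: "B = nsubst \<sigma>' C"
    obtain Q where Q: "C = NPre a Q" "P = psubst \<sigma> Q" using subst_NPre[OF A[symmetric] nv] by blast
    obtain \<mu>' \<nu> where m: "pdist (psubst \<sigma> Q) \<mu>'" "pdist (psubst \<sigma>' Q) \<nu>" "lift Rel \<mu>' \<nu>"
      using psub[OF _ r, of Q] w Q by (metis wfn.simps(3))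
    have "\<mu>' = \<mu>" using pdist_det[OF trans_pre.hyps] m(1) Q by simp
    moreover have "trans B a \<nu>" unfolding B Q by (simp add: trans.trans_pre m(2))
    ultimately show ?thesis using m by blast
  qed
next
  case (trans_rec Z D a \<mu>)
  from Rel_inv[OF trans_rec.prems] show ?case
  proof (elim disjE exE conjE)
    assume A: "NRec Z D = G" and B: "B = H"
    then have "Z = X" "D = bodyG" by (auto simp: G_def)
    then have e: "nsubst (NVar(Z := NRec Z D)) D = NSum Tg (nsubst gs F1)" using unfoldG by (simp add: G_def)
    obtain \<nu> where "trans (NSum (NSum Th Qh) (nsubst hs F1)) a \<nu>" "lift Rel \<mu> \<nu>"
      using trans_rec.IH Rel_unfold unfolding e by blast
    then show ?thesis using trans_H B by blast
  next
    assume "NRec Z D = Tg" then show ?thesis by (simp add: Tg_def)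
  next
    fix A1 A2 B1 B2 assume "NRec Z D = NSum A1 A2" then show ?thesis by simp
  next
    fix \<sigma> \<sigma>' C
    assume r: "\<forall>y. Rel (\<sigma> y) (\<sigma>' y)" and w: "wfn C" and nv: "\<forall>y. C \<noteq> NVar y"
      and A: "NRec Z D = nsubst \<sigma> C" and B: "B = nsubst \<sigma>' C"
    obtain D0 where D0: "C = NRec Z D0" "D = nsubst (\<sigma>(Z := NVar Z)) D0"
      using subst_NRec[OF A[symmetric] nv] by blast
    have cl: "\<forall>y. fvn (\<sigma> y) = {}" "\<forall>y. fvn (\<sigma>' y) = {}" using r Rel_closed by blast+
    have B': "B = NRec Z (nsubst (\<sigma>'(Z := NVar Z)) D0)" using B D0 by simp
    have u1: "nsubst (NVar(Z := NRec Z D)) D = nsubst (\<sigma>(Z := NRec Z D)) D0"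
      unfolding D0(2) by (rule unfold_subst[OF cl(1)])
    have u2: "nsubst (NVar(Z := B)) (nsubst (\<sigma>'(Z := NVar Z)) D0) = nsubst (\<sigma>'(Z := B)) D0"
      by (rule unfold_subst[OF cl(2)])
    have "Rel (nsubst (\<sigma>(Z := NRec Z D)) D0) (nsubst (\<sigma>'(Z := B)) D0)"
      by (rule rS) (use r trans_rec.prems w D0 in auto)
    then obtain \<nu> where "trans (nsubst (\<sigma>'(Z := B)) D0) a \<nu>" "lift Rel \<mu> \<nu>"
      using trans_rec.IH u1 by auto
    moreover have "trans (nsubst (\<sigma>'(Z := B)) D0) a \<nu> \<Longrightarrow> trans B a \<nu>"
      using u2 B' by (metis trans.trans_rec)
    ultimately show ?thesis by blast
  qed
next
  case (trans_suml E a \<mu> F)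
  from Rel_inv[OF trans_suml.prems] show ?case
  proof (elim disjE exE conjE)
    assume "NSum E F = G" then show ?thesis by (simp add: G_def)
  next
    assume "NSum E F = Tg" then show ?thesis by (simp add: Tg_def)
  next
    fix A1 A2 B1 B2 assume "NSum E F = NSum A1 A2" "B = NSum B1 B2" "Rel A1 B1" "Rel A2 B2"
    then show ?thesis using trans_suml.IH by (auto intro: trans.trans_suml)
  next
    fix \<sigma> \<sigma>' C
    assume r: "\<forall>y. Rel (\<sigma> y) (\<sigma>' y)" and w: "wfn C" and nv: "\<forall>y. C \<noteq> NVar y"
      and A: "NSum E F = nsubst \<sigma> C" and B: "B = nsubst \<sigma>' C"
    obtain C1 C2 where C: "C = NSum C1 C2" "E = nsubst \<sigma> C1" "F = nsubst \<sigma> C2"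
      using subst_NSum[OF A[symmetric] nv] by blast
    have "Rel E (nsubst \<sigma>' C1)" unfolding C by (rule rS) (use r w C in auto)
    then show ?thesis using trans_suml.IH B C by (auto intro: trans.trans_suml)
  qed
next
  case (trans_sumr E a \<mu> F)
  from Rel_inv[OF trans_sumr.prems] show ?case
  proof (elim disjE exE conjE)
    assume "NSum F E = G" then show ?thesis by (simp add: G_def)
  next
    assume "NSum F E = Tg" then show ?thesis by (simp add: Tg_def)
  next
    fix A1 A2 B1 B2 assume "NSum F E = NSum A1 A2" "B = NSum B1 B2" "Rel A1 B1" "Rel A2 B2"
    then show ?thesis using trans_sumr.IH by (auto intro: trans.trans_sumr)
  next
    fix \<sigma> \<sigma>' C
    assume r: "\<forall>y. Rel (\<sigma> y) (\<sigma>' y)" and w: "wfn C" and nv: "\<forall>y. C \<noteq> NVar y"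
      and A: "NSum F E = nsubst \<sigma> C" and B: "B = nsubst \<sigma>' C"
    obtain C1 C2 where C: "C = NSum C1 C2" "F = nsubst \<sigma> C1" "E = nsubst \<sigma> C2"
      using subst_NSum[OF A[symmetric] nv] by blast
    have "Rel E (nsubst \<sigma>' C2)" unfolding C by (rule rS) (use r w C in auto)
    then show ?thesis using trans_sumr.IH B C by (auto intro: trans.trans_sumr)
  qed
qed

definition resp :: "('a,'x) nexp \<Rightarrow> 'a act \<Rightarrow> ('a,'x) nexp subdist \<Rightarrow> bool" where
  "resp A \<alpha> \<mu> \<longleftrightarrow> trans A \<alpha> \<mu> \<or> (\<alpha> = Tau \<and> spec p A \<mu>)"

lemma resp_mono: "resp A \<alpha> \<mu> \<Longrightarrow> (\<And>\<beta> \<mu>'. trans A \<beta> \<mu>' \<Longrightarrow> trans A' \<beta> \<mu>') \<Longrightarrow> resp A' \<alpha> \<mu>"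
  unfolding resp_def spec_def by blast

lemma spec_Tg:
  assumes "pdist (psubst gs P1) \<mu>"
  shows "spec p Tg \<mu>"
proof -
  let ?S = "NSum G (nsubst gs E1)"
  let ?m = "\<lambda>s. p * dirac ?S s + (1 - p) * \<mu> s"
  have "pdist (psubst gs Pb) ?m" unfolding Pb_gs by (intro pdist.intros assms)
  then have t: "trans Tg Tau ?m" unfolding Tg_def by (rule trans.trans_pre)
  then have "trans ?S Tau ?m" by (intro trans.trans_suml trans_G)
  moreover have "is_subdist \<mu>"
    by (rule pdist_subdist[OF assms], rule wf_subst(2)[OF wfP]) (use proc_GH in \<open>simp add: gs_def proc_def\<close>)
  ultimately show ?thesis using t unfolding spec_def by blast
qed

lemma simB: "trans B \<alpha> \<nu> \<Longrightarrow> Rel A B \<Longrightarrow> \<exists>\<mu>. resp A \<alpha> \<mu> \<and> lift Rel \<mu> \<nu>"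
proof (induction arbitrary: A rule: trans.induct)
  case (trans_pre P \<nu> a)
  from Rel_inv[OF trans_pre.prems] show ?case
  proof (elim disjE exE conjE)
    assume "NPre a P = H" then show ?thesis by (simp add: H_def)
  next
    assume "NPre a P = NSum Th Qh" then show ?thesis by simp
  next
    fix A1 A2 B1 B2 assume "NPre a P = NSum B1 B2" then show ?thesis by simp
  next
    fix \<sigma> \<sigma>' C
    assume r: "\<forall>y. Rel (\<sigma> y) (\<sigma>' y)" and w: "wfn C" and nv: "\<forall>y. C \<noteq> NVar y"
      and A: "A = nsubst \<sigma> C" and B: "NPre a P = nsubst \<sigma>' C"
    obtain Q where Q: "C = NPre a Q" "P = psubst \<sigma>' Q" using subst_NPre[OF B[symmetric] nv] by blast
    obtain \<mu> \<nu>' where m: "pdist (psubst \<sigma> Q) \<mu>" "pdist (psubst \<sigma>' Q) \<nu>'" "lift Rel \<mu> \<nu>'"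
      using psub[OF _ r, of Q] w Q by (metis wfn.simps(3))
    have "\<nu>' = \<nu>" using pdist_det[OF trans_pre.hyps] m(2) Q by simp
    moreover have "trans A a \<mu>" unfolding A Q by (simp add: trans.trans_pre m(1))
    ultimately show ?thesis using m unfolding resp_def by blast
  qed
next
  case (trans_rec Z D a \<nu>)
  from Rel_inv[OF trans_rec.prems] show ?case
  proof (elim disjE exE conjE)
    assume A: "A = G" and B: "NRec Z D = H"
    then have "Z = X" "D = bodyH" by (auto simp: H_def)
    then have e: "nsubst (NVar(Z := NRec Z D)) D = NSum (NSum Th Qh) (nsubst hs F1)" using unfoldH by (simp add: H_def)
    obtain \<mu> where "resp (NSum Tg (nsubst gs F1)) a \<mu>" "lift Rel \<mu> \<nu>"
      using trans_rec.IH Rel_unfold unfolding e by blast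
    then show ?thesis using trans_G A resp_mono by blast
  next
    assume "NRec Z D = NSum Th Qh" then show ?thesis by simp
  next
    fix A1 A2 B1 B2 assume "NRec Z D = NSum B1 B2" then show ?thesis by simp
  next
    fix \<sigma> \<sigma>' C
    assume r: "\<forall>y. Rel (\<sigma> y) (\<sigma>' y)" and w: "wfn C" and nv: "\<forall>y. C \<noteq> NVar y"
      and A: "A = nsubst \<sigma> C" and B: "NRec Z D = nsubst \<sigma>' C"
    obtain D0 where D0: "C = NRec Z D0" "D = nsubst (\<sigma>'(Z := NVar Z)) D0"
      using subst_NRec[OF B[symmetric] nv] by blast
    have cl: "\<forall>y. fvn (\<sigma> y) = {}" "\<forall>y. fvn (\<sigma>' y) = {}" using r Rel_closed by blast+
    have A': "A = NRec Z (nsubst (\<sigma>(Z := NVar Z)) D0)" using A D0 by simp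
    have u1: "nsubst (NVar(Z := NRec Z D)) D = nsubst (\<sigma>'(Z := NRec Z D)) D0"
      unfolding D0(2) by (rule unfold_subst[OF cl(2)])
    have u2: "nsubst (NVar(Z := A)) (nsubst (\<sigma>(Z := NVar Z)) D0) = nsubst (\<sigma>(Z := A)) D0"
      by (rule unfold_subst[OF cl(1)])
    have "Rel (nsubst (\<sigma>(Z := A)) D0) (nsubst (\<sigma>'(Z := NRec Z D)) D0)"
      by (rule rS) (use r trans_rec.prems w D0 in auto)
    then obtain \<mu> where "resp (nsubst (\<sigma>(Z := A)) D0) a \<mu>" "lift Rel \<mu> \<nu>"
      using trans_rec.IH u1 by auto
    moreover have "\<And>\<beta> \<mu>'. trans (nsubst (\<sigma>(Z := A)) D0) \<beta> \<mu>' \<Longrightarrow> trans A \<beta> \<mu>'"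
      using u2 A' by (metis trans.trans_rec)
    ultimately show ?thesis using resp_mono by blast
  qed
next
  case (trans_suml E a \<nu> F)
  from Rel_inv[OF trans_suml.prems] show ?case
  proof (elim disjE exE conjE)
    assume "NSum E F = H" then show ?thesis by (simp add: H_def)
  next
    assume A: "A = Tg" and B: "NSum E F = NSum Th Qh"
    then have "trans Th a \<nu>" using trans_suml.hyps by simp
    then have a: "a = Tau" "pdist (psubst hs Pb) \<nu>" unfolding Th_def by (auto elim: trans_preE)
    obtain \<mu> \<nu>' where m: "pdist (psubst gs Pb) \<mu>" "pdist (psubst hs Pb) \<nu>'" "lift Rel \<mu> \<nu>'"
      using psub[OF wfPb Rel_gh] by blast
    have "\<nu>' = \<nu>" using pdist_det[OF a(2)] m(2) by simp
    moreover have "trans A Tau \<mu>" unfolding A Tg_def by (intro trans.trans_pre m(1))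
    ultimately show ?thesis using m a unfolding resp_def by blast
  next
    fix A1 A2 B1 B2 assume "A = NSum A1 A2" "NSum E F = NSum B1 B2" "Rel A1 B1" "Rel A2 B2"
    then show ?thesis using trans_suml.IH resp_mono by (metis nexp.inject(4) trans.trans_suml)
  next
    fix \<sigma> \<sigma>' C
    assume r: "\<forall>y. Rel (\<sigma> y) (\<sigma>' y)" and w: "wfn C" and nv: "\<forall>y. C \<noteq> NVar y"
      and A: "A = nsubst \<sigma> C" and B: "NSum E F = nsubst \<sigma>' C"
    obtain C1 C2 where C: "C = NSum C1 C2" "E = nsubst \<sigma>' C1" "F = nsubst \<sigma>' C2"
      using subst_NSum[OF B[symmetric] nv] by blast
    have "Rel (nsubst \<sigma> C1) E" unfolding C by (rule rS) (use r w C in auto)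
    then obtain \<mu> where "resp (nsubst \<sigma> C1) a \<mu>" "lift Rel \<mu> \<nu>" using trans_suml.IH by blast
    moreover have "\<And>\<beta> \<mu>'. trans (nsubst \<sigma> C1) \<beta> \<mu>' \<Longrightarrow> trans A \<beta> \<mu>'"
      using A C by (auto intro: trans.trans_suml)
    ultimately show ?thesis using resp_mono by blast
  qed
next
  case (trans_sumr E a \<nu> F)
  from Rel_inv[OF trans_sumr.prems] show ?case
  proof (elim disjE exE conjE)
    assume "NSum F E = H" then show ?thesis by (simp add: H_def)
  next
    assume A: "A = Tg" and B: "NSum F E = NSum Th Qh"
    then have "trans Qh a \<nu>" using trans_sumr.hyps by simp
    then have a: "a = Tau" "pdist (psubst hs P1) \<nu>" unfolding Qh_def by (auto elim: trans_preE)
    obtain \<mu> \<nu>' where m: "pdist (psubst gs P1) \<mu>" "pdist (psubst hs P1) \<nu>'" "lift Rel \<mu> \<nu>'"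
      using psub[OF wfP Rel_gh] by blast
    have "\<nu>' = \<nu>" using pdist_det[OF a(2)] m(2) by simp
    moreover have "spec p A \<mu>" unfolding A by (rule spec_Tg[OF m(1)])
    ultimately show ?thesis using m a unfolding resp_def by blast
  next
    fix A1 A2 B1 B2 assume "A = NSum A1 A2" "NSum F E = NSum B1 B2" "Rel A1 B1" "Rel A2 B2"
    then show ?thesis using trans_sumr.IH resp_mono by (metis nexp.inject(4) trans.trans_sumr)
  next
    fix \<sigma> \<sigma>' C
    assume r: "\<forall>y. Rel (\<sigma> y) (\<sigma>' y)" and w: "wfn C" and nv: "\<forall>y. C \<noteq> NVar y"
      and A: "A = nsubst \<sigma> C" and B: "NSum F E = nsubst \<sigma>' C"
    obtain C1 C2 where C: "C = NSum C1 C2" "F = nsubst \<sigma>' C1" "E = nsubst \<sigma>' C2"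
      using subst_NSum[OF B[symmetric] nv] by blast
    have "Rel (nsubst \<sigma> C2) E" unfolding C by (rule rS) (use r w C in auto)
    then obtain \<mu> where "resp (nsubst \<sigma> C2) a \<mu>" "lift Rel \<mu> \<nu>" using trans_sumr.IH by blast
    moreover have "\<And>\<beta> \<mu>'. trans (nsubst \<sigma> C2) \<beta> \<mu>' \<Longrightarrow> trans A \<beta> \<mu>'"
      using A C by (auto intro: trans.trans_sumr)
    ultimately show ?thesis using resp_mono by blast
  qed
qed

lemma resp_w:
  assumes "resp A \<alpha> \<mu>" "wfn A"
  shows "wtrans (dirac A) \<alpha> \<mu>" "wtrans_hat (dirac A) \<alpha> \<mu>"
proof -
  have "wtrans (dirac A) \<alpha> \<mu> \<and> wtrans_hat (dirac A) \<alpha> \<mu>"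
  proof (cases "trans A \<alpha> \<mu>")
    case True
    then show ?thesis using trans_wtrans[OF True trans_subdist[OF True assms(2)]] by simp
  next
    case False
    then have a: "\<alpha> = Tau" and sp: "spec p A \<mu>" using assms(1) unfolding resp_def by auto
    show ?thesis using spec_wtau[OF sp p0 p1] a by (simp add: wtrans_hat_def)
  qed
  then show "wtrans (dirac A) \<alpha> \<mu>" "wtrans_hat (dirac A) \<alpha> \<mu>" by auto
qed

lemma Rel_weak_bisim: "weak_bisim Rel"
  unfolding weak_bisim_def
proof (intro allI impI)
  fix A B assume r: "Rel A B"
  have pA: "proc A" and pB: "proc B" using Rel_proc[OF r] by auto
  have 1: "\<forall>\<alpha> \<mu>. trans A \<alpha> \<mu> \<longrightarrow> (\<exists>\<nu>. wtrans_hat (dirac B) \<alpha> \<nu> \<and> lift Rel \<mu> \<nu>)"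
  proof (intro allI impI)
    fix \<alpha> \<mu> assume "trans A \<alpha> \<mu>"
    then obtain \<nu> where t: "trans B \<alpha> \<nu>" "lift Rel \<mu> \<nu>" using simA r by blast
    have "wfn B" using pB by (simp add: proc_def)
    then show "\<exists>\<nu>. wtrans_hat (dirac B) \<alpha> \<nu> \<and> lift Rel \<mu> \<nu>"
      using trans_wtrans(2)[OF t(1) trans_subdist[OF t(1)]] t(2) by blast
  qed
  have 2: "\<forall>\<alpha> \<nu>. trans B \<alpha> \<nu> \<longrightarrow> (\<exists>\<mu>. wtrans_hat (dirac A) \<alpha> \<mu> \<and> lift Rel \<mu> \<nu>)"
  proof (intro allI impI)
    fix \<alpha> \<nu> assume "trans B \<alpha> \<nu>"
    then obtain \<mu> where t: "resp A \<alpha> \<mu>" "lift Rel \<mu> \<nu>" using simB r by blast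
    have "wfn A" using pA by (simp add: proc_def)
    then show "\<exists>\<mu>. wtrans_hat (dirac A) \<alpha> \<mu> \<and> lift Rel \<mu> \<nu>"
      using resp_w(2)[OF t(1)] t(2) by blast
  qed
  show "proc A \<and> proc B \<and> (\<forall>\<alpha> \<mu>. trans A \<alpha> \<mu> \<longrightarrow> (\<exists>\<nu>. wtrans_hat (dirac B) \<alpha> \<nu> \<and> lift Rel \<mu> \<nu>)) \<and>
     (\<forall>\<alpha> \<nu>. trans B \<alpha> \<nu> \<longrightarrow> (\<exists>\<mu>. wtrans_hat (dirac A) \<alpha> \<mu> \<and> lift Rel \<mu> \<nu>))"
    using pA pB 1 2 by blast
qed

lemma lift_Rel_wbisim: "lift Rel \<mu> \<nu> \<Longrightarrow> lift wbisim \<mu> \<nu>"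
proof (erule lift_mono)
  fix a b assume "Rel a b"
  then show "wbisim a b" unfolding wbisim_def using Rel_weak_bisim by blast
qed

lemma cong_GH: "cong_closed G H"
  unfolding cong_closed_def
proof (intro allI impI conjI)
  fix \<alpha> \<mu> assume "trans G \<alpha> \<mu>"
  then obtain \<nu> where t: "trans H \<alpha> \<nu>" "lift Rel \<mu> \<nu>" using simA rG by blast
  have "wfn H" using proc_GH by (simp add: proc_def)
  then show "\<exists>\<nu>. wtrans (dirac H) \<alpha> \<nu> \<and> lift wbisim \<mu> \<nu>"
    using trans_wtrans(1)[OF t(1) trans_subdist[OF t(1)]] lift_Rel_wbisim[OF t(2)] by blast
next
  fix \<alpha> \<nu> assume "trans H \<alpha> \<nu>"
  then obtain \<mu> where t: "resp G \<alpha> \<mu>" "lift Rel \<mu> \<nu>" using simB rG by blast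
  have "wfn G" using proc_GH by (simp add: proc_def)
  then show "\<exists>\<mu>. wtrans (dirac G) \<alpha> \<mu> \<and> lift wbisim \<mu> \<nu>"
    using resp_w(1)[OF t(1)] lift_Rel_wbisim[OF t(2)] by blast
qed

end

theorem mainTheorem4:
  fixes E F :: "('a, 'x) nexp" and P :: "('a, 'x) pexp" and X :: 'x and p :: real
  assumes "wfn E" and "wfn F" and "wfp P" and "0 < p" and "p < 1"
  shows "cong
    (NRec X (NSum (NPre Tau (PChoice (PDirac (NSum (NVar X) E)) p P)) F))
    (NRec X (NSum (NSum (NPre Tau (PChoice (PDirac (NSum (NVar X) E)) p P)) (NPre Tau P)) F))"
  unfolding cong_def
proof (intro allI impI)
  fix \<sigma> :: "'x \<Rightarrow> ('a,'x) nexp"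
  assume pr: "\<forall>x. proc (\<sigma> x)"
  define \<tau> where "\<tau> = \<sigma>(X := NVar X)"
  have fvt: "\<forall>y. fvn (\<tau> y) \<subseteq> {X}" using pr by (auto simp: \<tau>_def proc_def)
  have wft: "\<forall>y. wfn (\<tau> y)" using pr by (auto simp: \<tau>_def proc_def)
  interpret I: L X "nsubst \<tau> E" "nsubst \<tau> F" "psubst \<tau> P" p
  proof
    show "fvn (nsubst \<tau> E) \<subseteq> {X}" using fv_subst(1)[of \<tau> E] fvt by blast
    show "fvn (nsubst \<tau> F) \<subseteq> {X}" using fv_subst(1)[of \<tau> F] fvt by blast
    show "fvp (psubst \<tau> P) \<subseteq> {X}" using fv_subst(2)[of \<tau> P] fvt by blast
    show "wfn (nsubst \<tau> E)" using wf_subst(1)[OF assms(1) wft] .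
    show "wfn (nsubst \<tau> F)" using wf_subst(1)[OF assms(2) wft] .
    show "wfp (psubst \<tau> P)" using wf_subst(2)[OF assms(3) wft] .
  qed (use assms in auto)
  have tX: "\<tau> X = NVar X" by (simp add: \<tau>_def)
  have eG: "nsubst \<sigma> (NRec X (NSum (NPre Tau (PChoice (PDirac (NSum (NVar X) E)) p P)) F)) = I.G"
    by (simp add: I.G_def I.bodyG_def I.Pb_def \<tau>_def[symmetric] tX)
  have eH: "nsubst \<sigma> (NRec X (NSum (NSum (NPre Tau (PChoice (PDirac (NSum (NVar X) E)) p P)) (NPre Tau P)) F)) = I.H"
    by (simp add: I.H_def I.bodyH_def I.Pb_def \<tau>_def[symmetric] tX)
  show "cong_closed
     (nsubst \<sigma> (NRec X (NSum (NPre Tau (PChoice (PDirac (NSum (NVar X) E)) p P)) F)))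
     (nsubst \<sigma> (NRec X (NSum (NSum (NPre Tau (PChoice (PDirac (NSum (NVar X) E)) p P)) (NPre Tau P)) F)))"
    unfolding eG eH by (rule I.cong_GH)
qed

end
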